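(* Let $G$ be a finitely generated abelian group, written as $G=D\times\mathbb{Z}^n$ with $D$ finite and $n\geq1$. For $d\in\mathbb{N}$ let $a_d$ be the number of subgroups of index $d$ in $D$. Then for every $m\geq1$ the number of subgroups of index $m$ in $G$ equals $$\sum_{d_1\mid d_2\mid\cdots\mid d_n\mid m}a_{d_1}d_1d_2\cdots d_n,$$ the sum running over all chains of positive integers $d_1,\dots,d_n$ with $d_1\mid d_2$, \dots, $d_{n-1}\mid d_n$, $d_n\mid m$. *)

theory Defs
  imports "HOL-Algebra.Algebra"
begin

definition Zpow :: "nat \<Rightarrow> (nat \<Rightarrow> int) monoid" where
  "Zpow n = product_group {..<n} (\<lambda>_. integer_group)"

definition num_subgroups_of_index :: "('a, 'b) monoid_scheme \<Rightarrow> nat \<Rightarrow> nat" where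
  "num_subgroups_of_index G m = card {H. subgroup H G \<and> card (rcosets\<^bsub>G\<^esub> H) = m}"

end

theory Submission
  imports Defs
begin

lemma card_image_eq_rel:
  assumes "\<And>x y. x \<in> A \<Longrightarrow> y \<in> A \<Longrightarrow> (f x = f y) = (g x = g y)"
  shows "card (f ` A) = card (g ` A)"
proof -
  let ?h = "\<lambda>u. g (inv_into A f u)"
  have inv: "u \<in> f ` A \<Longrightarrow> inv_into A f u \<in> A \<and> f (inv_into A f u) = u" for u
    by (simp add: inv_into_into f_inv_into_f)
  have "inj_on ?h (f ` A)"
  proof (rule inj_onI)
    fix u v assume u: "u \<in> f ` A" and v: "v \<in> f ` A" and e: "?h u = ?h v"
    then show "u = v" using inv[OF u] inv[OF v] assms by metis
  qed
  moreover have "?h ` (f ` A) = g ` A"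
  proof
    show "?h ` f ` A \<subseteq> g ` A" using inv by auto
    show "g ` A \<subseteq> ?h ` f ` A"
    proof
      fix z assume "z \<in> g ` A"
      then obtain x where x: "x \<in> A" "z = g x" by auto
      have "inv_into A f (f x) \<in> A" "f (inv_into A f (f x)) = f x" using inv x by auto
      then have "g (inv_into A f (f x)) = g x" using assms x by metis
      then show "z \<in> ?h ` f ` A" using x by (metis image_eqI)
    qed
  qed
  ultimately show ?thesis by (metis card_image)
qed

lemma (in group) rcos_eq_iff:
  assumes "subgroup H G" "x \<in> carrier G" "y \<in> carrier G"
  shows "(H #> x = H #> y) = (x \<otimes> inv y \<in> H)"
proof
  assume "H #> x = H #> y"
  then have "x \<in> H #> y" using rcos_self assms by blast
  then show "x \<otimes> inv y \<in> H" using subgroup.rcos_module_imp[OF assms(1) is_group] assms by blast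
next
  assume "x \<otimes> inv y \<in> H"
  then have "x \<in> H #> y" using subgroup.rcos_module_rev[OF assms(1) is_group] assms by blast
  then show "H #> x = H #> y" using repr_independence assms by metis
qed

lemma rcosets_image: "rcosets\<^bsub>G\<^esub> H = (\<lambda>x. H #>\<^bsub>G\<^esub> x) ` carrier G"
  by (auto simp: RCOSETS_def)

lemma DirProd_nat_pow:
  assumes "group G" "group H"
  shows "(a, b) [^]\<^bsub>G \<times>\<times> H\<^esub> (n::nat) = (a [^]\<^bsub>G\<^esub> n, b [^]\<^bsub>H\<^esub> n)"
  by (induction n) auto

lemma DirProd_int_pow:
  assumes "group G" "group H" "a \<in> carrier G" "b \<in> carrier H"
  shows "(a, b) [^]\<^bsub>G \<times>\<times> H\<^esub> (q::int) = (a [^]\<^bsub>G\<^esub> q, b [^]\<^bsub>H\<^esub> q)"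
proof (cases "q < 0")
  case True
  have "(a, b) [^]\<^bsub>G \<times>\<times> H\<^esub> q = inv\<^bsub>G \<times>\<times> H\<^esub> ((a, b) [^]\<^bsub>G \<times>\<times> H\<^esub> nat (- q))"
    using True by (simp only: int_pow_def2 if_True)
  also have "\<dots> = inv\<^bsub>G \<times>\<times> H\<^esub> (a [^]\<^bsub>G\<^esub> nat (- q), b [^]\<^bsub>H\<^esub> nat (- q))"
    using DirProd_nat_pow[OF assms(1,2)] by simp
  also have "\<dots> = (inv\<^bsub>G\<^esub> (a [^]\<^bsub>G\<^esub> nat (- q)), inv\<^bsub>H\<^esub> (b [^]\<^bsub>H\<^esub> nat (- q)))"
    by (rule inv_DirProd) (use assms in \<open>auto intro: monoid.nat_pow_closed group.is_monoid\<close>)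
  also have "\<dots> = (a [^]\<^bsub>G\<^esub> q, b [^]\<^bsub>H\<^esub> q)"
    using True by (simp only: int_pow_def2 if_True)
  finally show ?thesis .
next
  case False
  then show ?thesis using DirProd_nat_pow[OF assms(1,2)] by (simp only: int_pow_def2 if_False)
qed

definition subgroups_of_index :: "('a, 'b) monoid_scheme \<Rightarrow> nat \<Rightarrow> 'a set set" where
  "subgroups_of_index G m = {H. subgroup H G \<and> card (rcosets\<^bsub>G\<^esub> H) = m}"

lemma num_subgroups_of_index_eq: "num_subgroups_of_index G m = card (subgroups_of_index G m)"
  by (simp add: num_subgroups_of_index_def subgroups_of_index_def)

lemma div_div_self_nat:
  assumes "(0::nat) < m" "a dvd m" shows "m div (m div a) = a"
proof -
  obtain c where c: "m = a * c" using assms(2) by (auto elim: dvdE)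
  then have "a > 0" "c > 0" using assms(1) by auto
  then show ?thesis using c by simp
qed

definition Psi :: "('a, 'b) monoid_scheme \<Rightarrow> 'a set \<Rightarrow> nat \<Rightarrow> 'a \<Rightarrow> ('a \<times> int) set" where
  "Psi G K k x = {(g, a). g \<in> carrier G \<and> int k dvd a \<and> g \<otimes>\<^bsub>G\<^esub> inv\<^bsub>G\<^esub> (x [^]\<^bsub>G\<^esub> (a div int k)) \<in> K}"

context comm_group
begin

lemma Psi_subgroup:
  assumes K: "subgroup K G" and k: "k > 0" and x: "x \<in> carrier G"
  shows "subgroup (Psi G K k x) (G \<times>\<times> integer_group)"
proof -
  interpret P: group "G \<times>\<times> integer_group" by (simp add: DirProd_group is_group)
  interpret K: subgroup K G by (rule K)
  show ?thesis
  proof (rule P.subgroupI)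
    show "Psi G K k x \<subseteq> carrier (G \<times>\<times> integer_group)" by (auto simp: Psi_def)
    have "(\<one>, 0) \<in> Psi G K k x" using x by (simp add: Psi_def)
    then show "Psi G K k x \<noteq> {}" by blast
  next
    fix p assume "p \<in> Psi G K k x"
    then obtain g a where p: "p = (g, a)" "g \<in> carrier G" "int k dvd a"
      "g \<otimes> inv (x [^] (a div int k)) \<in> K" by (auto simp: Psi_def)
    obtain q where q: "a = int k * q" using p by (auto elim: dvdE)
    have na: "- a = int k * (- q)" using q by simp
    have aq: "a div int k = q" "(- a) div int k = - q" using q k
      by (simp, metis mult.commute mult_minus_left nonzero_mult_div_cancel_right
    of_nat_0_less_iff of_nat_less_0_iff)
    have "inv g \<otimes> inv (x [^] (- q)) = inv (g \<otimes> inv (x [^] q))"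
      using p x by (simp add: int_pow_neg inv_mult)
    also have "\<dots> \<in> K" using p aq by simp
    finally have "(inv g, - a) \<in> Psi G K k x"
      using p aq by (simp add: Psi_def)
    then show "inv\<^bsub>G \<times>\<times> integer_group\<^esub> p \<in> Psi G K k x"
      using p by (simp add: inv_DirProd)
  next
    fix p p' assume "p \<in> Psi G K k x" "p' \<in> Psi G K k x"
    then obtain g a h b where p: "p = (g, a)" "g \<in> carrier G" "int k dvd a"
      "g \<otimes> inv (x [^] (a div int k)) \<in> K"
      and p': "p' = (h, b)" "h \<in> carrier G" "int k dvd b"
      "h \<otimes> inv (x [^] (b div int k)) \<in> K" by (auto simp: Psi_def)
    obtain q where q: "a = int k * q" using p by (auto elim: dvdE)
    obtain r where r: "b = int k * r" using p' by (auto elim: dvdE)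
    have aq: "a div int k = q" "b div int k = r" "(a + b) div int k = q + r" using q r k
      by (auto simp: distrib_left[symmetric])
    have "(g \<otimes> h) \<otimes> inv (x [^] (q + r)) = (g \<otimes> inv (x [^] q)) \<otimes> (h \<otimes> inv (x [^] r))"
      using p p' x by (simp add: comm_groupE(3) comm_group_axioms int_pow_mult inv_mult m_lcomm)
    also have "\<dots> \<in> K" using p p' aq by simp
    finally have "(g \<otimes> h, a + b) \<in> Psi G K k x"
      using p p' aq by (simp add: Psi_def)
    then show "p \<otimes>\<^bsub>G \<times>\<times> integer_group\<^esub> p' \<in> Psi G K k x"
      using p p' by simp
  qed
qed

lemma div_diff_same_mod:
  assumes "0 < k" "(a::int) mod int k = b mod int k"
  shows "(a - b) div int k = a div int k - b div int k"
proof -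
  have "a = int k * (a div int k) + a mod int k" "b = int k * (b div int k) + b mod int k"
    by simp_all
  then have "a - b = int k * (a div int k) - int k * (b div int k)" using assms(2)
    by linarith
  then have "a - b = int k * (a div int k - b div int k)"
    by (simp add: right_diff_distrib)
  then show ?thesis using assms(1) by simp
qed

lemma Psi_index:
  assumes K: "subgroup K G" and k: "k > 0" and x: "x \<in> carrier G"
  shows "card (rcosets\<^bsub>G \<times>\<times> integer_group\<^esub> (Psi G K k x)) = card (rcosets K) * k"
proof -
  interpret P: group "G \<times>\<times> integer_group" by (simp add: DirProd_group is_group)
  interpret K: subgroup K G by (rule K)
  let ?H = "Psi G K k x"
  let ?P = "G \<times>\<times> integer_group"
  have H: "subgroup ?H ?P" by (rule Psi_subgroup[OF K k x])
  define \<phi> where "\<phi> p = (K #> (fst p \<otimes> inv (x [^] (snd p div int k))), snd p mod int k)" for p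
  have rel: "(?H #>\<^bsub>?P\<^esub> p = ?H #>\<^bsub>?P\<^esub> p') = (\<phi> p = \<phi> p')"
    if p: "p \<in> carrier ?P" and p': "p' \<in> carrier ?P" for p p'
  proof -
    obtain g a where ga: "p = (g, a)" "g \<in> carrier G" using p by auto
    obtain h b where hb: "p' = (h, b)" "h \<in> carrier G" using p' by auto
    have "(?H #>\<^bsub>?P\<^esub> p = ?H #>\<^bsub>?P\<^esub> p') = (p \<otimes>\<^bsub>?P\<^esub> inv\<^bsub>?P\<^esub> p' \<in> ?H)"
      using P.rcos_eq_iff[OF H p p'] .
    also have "p \<otimes>\<^bsub>?P\<^esub> inv\<^bsub>?P\<^esub> p' = (g \<otimes> inv h, a - b)"
      using ga hb by (simp add: inv_DirProd)
    also have "((g \<otimes> inv h, a - b) \<in> ?H) = (\<phi> p = \<phi> p')"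
    proof (cases "a mod int k = b mod int k")
      case True
      have dv: "int k dvd (a - b)" using True by (simp add: mod_eq_dvd_iff)
      have d: "(a - b) div int k = a div int k - b div int k"
        using div_diff_same_mod[OF k True] .
      have e: "(g \<otimes> inv h) \<otimes> inv (x [^] (a div int k - b div int k)) =
          (g \<otimes> inv (x [^] (a div int k))) \<otimes> inv (h \<otimes> inv (x [^] (b div int k)))"
        using ga hb x by (simp add: int_pow_diff inv_mult m_assoc m_lcomm)
      have "((g \<otimes> inv h, a - b) \<in> ?H) =
          ((g \<otimes> inv (x [^] (a div int k))) \<otimes> inv (h \<otimes> inv (x [^] (b div int k))) \<in> K)"
        using dv d e ga hb by (simp add: Psi_def)
      also have "\<dots> = (K #> (g \<otimes> inv (x [^] (a div int k))) = K #> (h \<otimes> inv (x [^] (b div int k))))"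
        using rcos_eq_iff[OF K] ga hb x by simp
      also have "\<dots> = (\<phi> p = \<phi> p')" using True ga hb by (simp add: \<phi>_def)
      finally show ?thesis .
    next
      case False
      have "\<not> int k dvd (a - b)" using False by (simp add: mod_eq_dvd_iff)
      then show ?thesis using False ga hb by (simp add: Psi_def \<phi>_def)
    qed
    finally show ?thesis .
  qed
  have img: "\<phi> ` carrier ?P = (rcosets K) \<times> {0..<int k}"
  proof
    show "\<phi> ` carrier ?P \<subseteq> (rcosets K) \<times> {0..<int k}"
      using k x by (auto simp: \<phi>_def intro!: rcosetsI)
    show "(rcosets K) \<times> {0..<int k} \<subseteq> \<phi> ` carrier ?P"
    proof
      fix c assume "c \<in> (rcosets K) \<times> {0..<int k}"
      then obtain y r where c: "c = (K #> y, r)" "y \<in> carrier G" "0 \<le> r" "r < int k"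
        by (auto simp: RCOSETS_def)
      have "r div int k = 0" "r mod int k = r" using c by auto
      then have "\<phi> (y, r) = c" using c by (simp add: \<phi>_def)
      moreover have "(y, r) \<in> carrier ?P" using c by simp
      ultimately show "c \<in> \<phi> ` carrier ?P" by blast
    qed
  qed
  have "card (rcosets\<^bsub>?P\<^esub> ?H) = card ((\<lambda>p. ?H #>\<^bsub>?P\<^esub> p) ` carrier ?P)"
    by (simp add: rcosets_image)
  also have "\<dots> = card (\<phi> ` carrier ?P)" by (rule card_image_eq_rel) (rule rel)
  also have "\<dots> = card (rcosets K) * k" unfolding img by (simp add: card_cartesian_product)
  finally show ?thesis .
qed

lemma Psi_self:
  assumes K: "subgroup K G" and k: "k > 0" and x: "x \<in> carrier G"
  shows "(x, int k) \<in> Psi G K k x"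
  using k x subgroup.one_closed[OF K] by (simp add: Psi_def)

lemma Psi_sub:
  assumes K: "subgroup K G" and k: "k > 0" and x: "x \<in> carrier G" and y: "y \<in> carrier G"
    and xy: "y \<otimes> inv x \<in> K"
  shows "Psi G K k x \<subseteq> Psi G K k y"
proof
  fix p assume "p \<in> Psi G K k x"
  then obtain g a where p: "p = (g, a)" "g \<in> carrier G" "int k dvd a"
      "g \<otimes> inv (x [^] (a div int k)) \<in> K" by (auto simp: Psi_def)
  define q where "q = a div int k"
  have "inv (y \<otimes> inv x) [^] q \<in> K"
    using xy K by (simp add: subgroup_int_pow_closed subgroup.m_inv_closed)
  have e: "g \<otimes> inv (y [^] q) = (g \<otimes> inv (x [^] q)) \<otimes> (inv (y \<otimes> inv x) [^] q)"
    using x y p by (simp add: int_pow_distrib int_pow_inv inv_mult_group inv_solve_left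
    m_assoc)
  have "g \<otimes> inv (y [^] q) \<in> K"
    unfolding e using p \<open>inv (y \<otimes> inv x) [^] q \<in> K\<close> q_def subgroup.m_closed[OF K] by blast
  then show "p \<in> Psi G K k y" using p q_def by (simp add: Psi_def)
qed

lemma Psi_eq_iff:
  assumes K: "subgroup K G" and k: "k > 0" and x: "x \<in> carrier G" and y: "y \<in> carrier G"
  shows "(Psi G K k x = Psi G K k y) = (K #> x = K #> y)"
proof
  assume "Psi G K k x = Psi G K k y"
  then have "(x, int k) \<in> Psi G K k y" using Psi_self[OF K k x] by simp
  then have "x \<otimes> inv y \<in> K" using k y by (simp add: Psi_def)
  then show "K #> x = K #> y" using rcos_eq_iff[OF K x y] by simp
next
  assume "K #> x = K #> y"
  then have xy: "x \<otimes> inv y \<in> K" using rcos_eq_iff[OF K x y] by simp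
  then have "inv (x \<otimes> inv y) \<in> K" using K by (simp add: subgroup.m_inv_closed)
  then have yx: "y \<otimes> inv x \<in> K" using x y by (simp add: inv_mult_group)
  show "Psi G K k x = Psi G K k y"
    using Psi_sub[OF K k x y yx] Psi_sub[OF K k y x xy] by blast
qed

definition slice :: "'a set \<Rightarrow> ('a \<times> int) set \<Rightarrow> 'a set" where
  "slice C H = {g \<in> C. (g, 0) \<in> H}"

definition zgen :: "('a \<times> int) set \<Rightarrow> nat" where
  "zgen H = (LEAST k::nat. 0 < k \<and> (\<exists>g. (g, int k) \<in> H))"

lemma Psi_slice:
  assumes K: "subgroup K G" and k: "k > 0" and x: "x \<in> carrier G"
  shows "slice (carrier G) (Psi G K k x) = K"
  using subgroup.subset[OF K] by (auto simp: slice_def Psi_def)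

lemma Psi_zgen:
  assumes K: "subgroup K G" and k: "k > 0" and x: "x \<in> carrier G"
  shows "zgen (Psi G K k x) = k"
  unfolding zgen_def
proof (rule Least_equality)
  show "0 < k \<and> (\<exists>g. (g, int k) \<in> Psi G K k x)" using Psi_self[OF K k x] k by blast
next
  fix j assume "0 < j \<and> (\<exists>g. (g, int j) \<in> Psi G K k x)"
  then have "0 < j" "int k dvd int j" by (auto simp: Psi_def)
  then show "k \<le> j" by (simp add: dvd_imp_le)
qed

lemma structure_subgroup:
  assumes H: "subgroup H (G \<times>\<times> integer_group)"
    and m: "card (rcosets\<^bsub>G \<times>\<times> integer_group\<^esub> H) = m" "m > 0"
  shows "subgroup (slice (carrier G) H) G \<and> zgen H > 0 \<and>
         (\<exists>x \<in> carrier G. H = Psi G (slice (carrier G) H) (zgen H) x)"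
proof -
  let ?P = "G \<times>\<times> integer_group"
  interpret P: group ?P by (simp add: DirProd_group is_group)
  interpret H: subgroup H ?P by (rule H)
  let ?K = "slice (carrier G) H"
  have Hc: "H \<subseteq> carrier G \<times> UNIV" using H.subset by simp
  have K: "subgroup ?K G"
  proof (rule subgroupI)
    show "?K \<subseteq> carrier G" by (auto simp: slice_def)
    have "(\<one>, 0) \<in> H" using H.one_closed by simp
    then show "?K \<noteq> {}" by (auto simp: slice_def)
  next
    fix g assume "g \<in> ?K"
    then have g: "g \<in> carrier G" "(g, 0) \<in> H" by (auto simp: slice_def)
    then have "inv\<^bsub>?P\<^esub> (g, 0) \<in> H" using H.m_inv_closed by blast
    then show "inv g \<in> ?K" using g by (simp add: inv_DirProd[OF is_group group_integer_group] slice_def)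
  next
    fix g h assume "g \<in> ?K" "h \<in> ?K"
    then have g: "g \<in> carrier G" "(g, 0) \<in> H" "h \<in> carrier G" "(h, 0) \<in> H" by (auto simp: slice_def)
    then have "(g, 0) \<otimes>\<^bsub>?P\<^esub> (h, 0) \<in> H" using H.m_closed by blast
    then show "g \<otimes> h \<in> ?K" using g by (simp add: slice_def)
  qed
  have nz: "\<exists>g a. (g, a) \<in> H \<and> a \<noteq> 0"
  proof (rule ccontr)
    assume "\<not> ?thesis"
    then have z: "\<And>g a. (g, a) \<in> H \<Longrightarrow> a = 0" by blast
    have "inj (\<lambda>a. H #>\<^bsub>?P\<^esub> (\<one>, a))"
    proof (rule injI)
      fix a b assume "H #>\<^bsub>?P\<^esub> (\<one>, a) = H #>\<^bsub>?P\<^esub> (\<one>, b)"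
      then have "(\<one>, a) \<otimes>\<^bsub>?P\<^esub> inv\<^bsub>?P\<^esub> (\<one>, b) \<in> H"
        using P.rcos_eq_iff[OF H] by simp
      then have "(\<one>, a - b) \<in> H" by (simp add: inv_DirProd[OF is_group group_integer_group])
      then have "a - b = 0" by (rule z)
      then show "a = b" by simp
    qed
    then have "infinite (range (\<lambda>a. H #>\<^bsub>?P\<^esub> (\<one>, a)))"
      using finite_imageD infinite_UNIV_int by blast
    moreover have "range (\<lambda>a. H #>\<^bsub>?P\<^esub> (\<one>, a)) \<subseteq> rcosets\<^bsub>?P\<^esub> H"
      by (auto intro!: P.rcosetsI[OF H.subset])
    ultimately have "infinite (rcosets\<^bsub>?P\<^esub> H)" using finite_subset by blast
    then have "card (rcosets\<^bsub>?P\<^esub> H) = 0" by (rule card.infinite)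
    with m show False by simp
  qed
  have ex: "\<exists>k::nat. 0 < k \<and> (\<exists>g. (g, int k) \<in> H)"
  proof -
    obtain g a where ga: "(g, a) \<in> H" "a \<noteq> 0" using nz by blast
    show ?thesis
    proof (cases "a > 0")
      case True
      then show ?thesis using ga by (intro exI[of _ "nat a"]) auto
    next
      case False
      have "inv\<^bsub>?P\<^esub> (g, a) \<in> H" using ga H.m_inv_closed by blast
      moreover have "g \<in> carrier G" using ga Hc by auto
      ultimately have "(inv g, - a) \<in> H" by (simp add: inv_DirProd[OF is_group group_integer_group])
      then show ?thesis using ga False by (intro exI[of _ "nat (- a)"]) auto
    qed
  qed
  define k where "k = zgen H"
  have k: "0 < k" "\<exists>g. (g, int k) \<in> H"
    using LeastI_ex[OF ex] unfolding k_def zgen_def by auto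
  have kmin: "\<And>j. 0 < j \<Longrightarrow> (g, int j) \<in> H \<Longrightarrow> k \<le> j" for g
    unfolding k_def zgen_def by (rule Least_le) blast
  obtain x where x: "(x, int k) \<in> H" using k by blast
  have xc: "x \<in> carrier G" using x Hc by auto
  have pw: "(x [^] q, int k * q) \<in> H" for q :: int
  proof -
    have "(x, int k) [^]\<^bsub>?P\<^esub> q \<in> H" using x P.subgroup_int_pow_closed[OF H] by blast
    then show ?thesis using DirProd_int_pow[OF is_group group_integer_group xc, of "int k" q]
      by (simp add: mult.commute)
  qed
  have "H = Psi G ?K k x"
  proof
    show "H \<subseteq> Psi G ?K k x"
    proof
      fix p assume p: "p \<in> H"
      then obtain g a where ga: "p = (g, a)" "g \<in> carrier G" using Hc by auto
      define q where "q = a div int k"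
      define r where "r = a mod int k"
      have "(g, a) \<otimes>\<^bsub>?P\<^esub> inv\<^bsub>?P\<^esub> (x [^] q, int k * q) \<in> H"
        using p ga pw H.m_closed H.m_inv_closed by blast
      then have gr: "(g \<otimes> inv (x [^] q), r) \<in> H"
        using xc ga by (simp add: inv_DirProd[OF is_group group_integer_group] q_def r_def minus_mult_div_eq_mod)
      have r: "0 \<le> r" "r < int k" using k by (auto simp: r_def)
      have "r = 0"
      proof (rule ccontr)
        assume "r \<noteq> 0"
        then have "0 < nat r" "(g \<otimes> inv (x [^] q), int (nat r)) \<in> H" using r gr by auto
        then have "k \<le> nat r" using kmin by blast
        then show False using r by linarith
      qed
      then have "int k dvd a" "g \<otimes> inv (x [^] q) \<in> ?K"
        using gr ga xc by (auto simp: r_def slice_def)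
      then show "p \<in> Psi G ?K k x" using ga by (simp add: Psi_def q_def)
    qed
  next
    show "Psi G ?K k x \<subseteq> H"
    proof
      fix p assume "p \<in> Psi G ?K k x"
      then obtain g a where ga: "p = (g, a)" "g \<in> carrier G" "int k dvd a"
        "(g \<otimes> inv (x [^] (a div int k)), 0) \<in> H"
        by (auto simp: Psi_def slice_def)
      define q where "q = a div int k"
      have aq: "a = int k * q" using ga q_def by simp
      have "(g \<otimes> inv (x [^] q), 0) \<otimes>\<^bsub>?P\<^esub> (x [^] q, int k * q) \<in> H"
        using ga pw H.m_closed q_def by blast
      moreover have "(g \<otimes> inv (x [^] q), 0) \<otimes>\<^bsub>?P\<^esub> (x [^] q, int k * q) = (g, a)"
        using ga xc aq by (simp add: m_assoc)
      ultimately show "p \<in> H" using ga by simp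
    qed
  qed
  then show ?thesis using K k xc k_def by blast
qed

lemma Psi_piece_card:
  assumes K: "subgroup K G" and k: "k > 0"
  shows "card ((\<lambda>x. Psi G K k x) ` carrier G) = card (rcosets K)"
  unfolding rcosets_image
  by (rule card_image_eq_rel) (simp add: Psi_eq_iff[OF K k])

lemma count_rec:
  assumes m: "m > 0" and fin: "\<And>j. j dvd m \<Longrightarrow> finite (subgroups_of_index G j)"
  shows "finite (subgroups_of_index (G \<times>\<times> integer_group) m) \<and>
    card (subgroups_of_index (G \<times>\<times> integer_group) m) = (\<Sum>j | j dvd m. j * card (subgroups_of_index G j))"
proof -
  let ?P = "G \<times>\<times> integer_group"
  let ?Dv = "{k::nat. k dvd m}"
  have finDv: "finite ?Dv" using m by (auto intro: finite_subset[of _ "{..m}"] dest: dvd_imp_le)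
  have Dvpos: "k \<in> ?Dv \<Longrightarrow> 0 < k" for k using m by (auto intro: Nat.gr0I)
  define A where "A k = (\<Union>K\<in>subgroups_of_index G (m div k). (\<lambda>x. Psi G K k x) ` carrier G)" for k
  have decomp: "subgroups_of_index ?P m = (\<Union>k\<in>?Dv. A k)"
  proof
    show "subgroups_of_index ?P m \<subseteq> (\<Union>k\<in>?Dv. A k)"
    proof
      fix H assume "H \<in> subgroups_of_index ?P m"
      then have H: "subgroup H ?P" "card (rcosets\<^bsub>?P\<^esub> H) = m" by (auto simp: subgroups_of_index_def)
      obtain x where K: "subgroup (slice (carrier G) H) G" and k: "zgen H > 0" and x: "x \<in> carrier G"
        and Hx: "H = Psi G (slice (carrier G) H) (zgen H) x"
        using structure_subgroup[OF H m] by blast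
      have "m = card (rcosets (slice (carrier G) H)) * zgen H"
        using H(2) Psi_index[OF K k x] Hx by simp
      then have "zgen H \<in> ?Dv" "card (rcosets (slice (carrier G) H)) = m div zgen H"
        using k by auto
      then show "H \<in> (\<Union>k\<in>?Dv. A k)"
        unfolding A_def subgroups_of_index_def using K x Hx by blast
    qed
  next
    show "(\<Union>k\<in>?Dv. A k) \<subseteq> subgroups_of_index ?P m"
    proof
      fix H assume "H \<in> (\<Union>k\<in>?Dv. A k)"
      then obtain k K x where k: "k dvd m" and K: "subgroup K G" "card (rcosets K) = m div k"
        and x: "x \<in> carrier G" and Hx: "H = Psi G K k x"
        unfolding A_def subgroups_of_index_def by blast
      have kp: "k > 0" using k Dvpos by blast
      have "card (rcosets\<^bsub>?P\<^esub> H) = m"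
        using Psi_index[OF K(1) kp x] K(2) k Hx by simp
      then show "H \<in> subgroups_of_index ?P m"
        using Psi_subgroup[OF K(1) kp x] Hx by (simp add: subgroups_of_index_def)
    qed
  qed
  have piece: "finite ((\<lambda>x. Psi G K k x) ` carrier G) \<and> card ((\<lambda>x. Psi G K k x) ` carrier G) = m div k"
    if k: "k \<in> ?Dv" and K: "K \<in> subgroups_of_index G (m div k)" for k K
  proof -
    have kp: "k > 0" using k Dvpos by blast
    have K': "subgroup K G" "card (rcosets K) = m div k" using K by (auto simp: subgroups_of_index_def)
    have c: "card ((\<lambda>x. Psi G K k x) ` carrier G) = m div k"
      using Psi_piece_card[OF K'(1) kp] K'(2) by simp
    obtain c where mc: "m = k * c" using k by (auto elim: dvdE)
    have "m div k > 0" using kp m mc by simp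
    then have "finite ((\<lambda>x. Psi G K k x) ` carrier G)" using c card.infinite by (metis less_irrefl)
    then show ?thesis using c by simp
  qed
  have Ak: "finite (A k) \<and> card (A k) = (m div k) * card (subgroups_of_index G (m div k))"
    if k: "k \<in> ?Dv" for k
  proof -
    have kp: "k > 0" using k Dvpos by blast
    have fS: "finite (subgroups_of_index G (m div k))" using fin k by auto
    have disj: "((\<lambda>x. Psi G K k x) ` carrier G) \<inter> ((\<lambda>x. Psi G K' k x) ` carrier G) = {}"
      if "K \<in> subgroups_of_index G (m div k)" "K' \<in> subgroups_of_index G (m div k)" "K \<noteq> K'" for K K'
    proof (rule ccontr)
      assume "\<not> ?thesis"
      then obtain x y where xy: "x \<in> carrier G" "y \<in> carrier G" "Psi G K k x = Psi G K' k y" by auto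
      have "subgroup K G" "subgroup K' G" using that by (auto simp: subgroups_of_index_def)
      then have "K = K'" using Psi_slice[OF _ kp] xy by metis
      then show False using that by simp
    qed
    have "card (A k) = (\<Sum>K\<in>subgroups_of_index G (m div k). card ((\<lambda>x. Psi G K k x) ` carrier G))"
      unfolding A_def using fS piece[OF k] disj by (intro card_UN_disjoint) auto
    also have "\<dots> = (\<Sum>K\<in>subgroups_of_index G (m div k). m div k)"
      using piece[OF k] by simp
    finally show ?thesis unfolding A_def using fS piece[OF k] by simp
  qed
  have disjA: "A k \<inter> A k' = {}" if "k \<in> ?Dv" "k' \<in> ?Dv" "k \<noteq> k'" for k k'
  proof (rule ccontr)
    assume "\<not> ?thesis"
    then obtain H where "H \<in> A k" "H \<in> A k'" by blast
    then obtain K x K' x' where "subgroup K G" "x \<in> carrier G" "H = Psi G K k x"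
      "subgroup K' G" "x' \<in> carrier G" "H = Psi G K' k' x'"
      unfolding A_def subgroups_of_index_def by blast
    then have "k = k'" using Psi_zgen Dvpos that by metis
    then show False using that by simp
  qed
  have "finite (subgroups_of_index ?P m)" unfolding decomp using finDv Ak by blast
  moreover have "card (subgroups_of_index ?P m) = (\<Sum>k\<in>?Dv. card (A k))"
    unfolding decomp using finDv Ak disjA by (intro card_UN_disjoint) auto
  moreover have "\<dots> = (\<Sum>k\<in>?Dv. (m div k) * card (subgroups_of_index G (m div k)))"
    using Ak by simp
  moreover have "\<dots> = (\<Sum>j\<in>?Dv. j * card (subgroups_of_index G j))"
  proof (rule sum.reindex_bij_witness[of _ "\<lambda>j. m div j" "\<lambda>k. m div k"])
    show "\<And>a. a \<in> ?Dv \<Longrightarrow> m div (m div a) = a" using m div_div_self_nat by blast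
    show "\<And>a. a \<in> ?Dv \<Longrightarrow> m div a \<in> ?Dv" by (metis dvd_mult_div_cancel dvd_triv_right mem_Collect_eq)
    show "\<And>a. a \<in> ?Dv \<Longrightarrow> m div (m div a) = a" using m div_div_self_nat by blast
    show "\<And>a. a \<in> ?Dv \<Longrightarrow> m div a \<in> ?Dv" by (metis dvd_mult_div_cancel dvd_triv_right mem_Collect_eq)
    show "\<And>a. a \<in> ?Dv \<Longrightarrow> m div a * card (subgroups_of_index G (m div a)) = m div a * card (subgroups_of_index G (m div a))"
      by simp
  qed
  ultimately show ?thesis by simp
qed

end

lemma iso_image_subgroups_of_index:
  assumes P: "group P" and Q: "group Q" and phi: "\<phi> \<in> iso P Q"
    and H: "H \<in> subgroups_of_index P m"
  shows "\<phi> ` H \<in> subgroups_of_index Q m"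
proof -
  interpret gh: group_hom P Q \<phi>
    using P Q phi by (simp add: group_hom_def group_hom_axioms_def iso_def)
  interpret P: group P by (rule P)
  have Hs: "subgroup H P" and Hc: "card (rcosets\<^bsub>P\<^esub> H) = m" using H by (auto simp: subgroups_of_index_def)
  have bij: "bij_betw \<phi> (carrier P) (carrier Q)" using phi by (simp add: iso_def)
  have cQ: "carrier Q = \<phi> ` carrier P" using bij by (simp add: bij_betw_def)
  have inj: "inj_on \<phi> (carrier P)" using bij by (simp add: bij_betw_def)
  have HsubP: "H \<subseteq> carrier P" using Hs by (rule subgroup.subset)
  have rc: "(\<phi> ` H) #>\<^bsub>Q\<^esub> (\<phi> x) = \<phi> ` (H #>\<^bsub>P\<^esub> x)" if x: "x \<in> carrier P" for x
  proof -
    have "\<And>h. h \<in> H \<Longrightarrow> \<phi> (h \<otimes>\<^bsub>P\<^esub> x) = \<phi> h \<otimes>\<^bsub>Q\<^esub> \<phi> x"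
      using x HsubP by (auto intro: gh.hom_mult)
    then show ?thesis unfolding r_coset_def by (auto simp: image_iff)
  qed
  have "rcosets\<^bsub>Q\<^esub> (\<phi> ` H) = (\<lambda>x. (\<phi> ` H) #>\<^bsub>Q\<^esub> x) ` (\<phi> ` carrier P)"
    by (simp add: rcosets_image cQ)
  also have "\<dots> = (\<lambda>x. \<phi> ` (H #>\<^bsub>P\<^esub> x)) ` carrier P"
    using rc by (simp add: image_image)
  also have "\<dots> = (\<lambda>S. \<phi> ` S) ` (rcosets\<^bsub>P\<^esub> H)"
    by (simp add: rcosets_image image_image)
  finally have eq: "rcosets\<^bsub>Q\<^esub> (\<phi> ` H) = (\<lambda>S. \<phi> ` S) ` (rcosets\<^bsub>P\<^esub> H)" .
  have "rcosets\<^bsub>P\<^esub> H \<subseteq> Pow (carrier P)"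
    using subgroup.rcosets_carrier[OF Hs P] by blast
  then have "inj_on (\<lambda>S. \<phi> ` S) (rcosets\<^bsub>P\<^esub> H)"
    using inj_on_image_Pow[OF inj] inj_on_subset by blast
  then have "card (rcosets\<^bsub>Q\<^esub> (\<phi> ` H)) = m"
    using eq Hc card_image by metis
  moreover have "subgroup (\<phi> ` H) Q" using gh.subgroup_img_is_subgroup[OF Hs] .
  ultimately show ?thesis by (simp add: subgroups_of_index_def)
qed

lemma iso_subgroups_of_index:
  assumes P: "group P" and Q: "group Q" and phi: "\<phi> \<in> iso P Q"
  shows "finite (subgroups_of_index Q m) = finite (subgroups_of_index P m) \<and>
         card (subgroups_of_index Q m) = card (subgroups_of_index P m)"
proof -
  let ?f = "\<lambda>H. \<phi> ` H"
  define \<psi> where "\<psi> = inv_into (carrier P) \<phi>"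
  have psi: "\<psi> \<in> iso Q P" unfolding \<psi>_def using group.iso_set_sym[OF P phi] .
  have bij: "bij_betw \<phi> (carrier P) (carrier Q)" using phi by (simp add: iso_def)
  have inj: "inj_on \<phi> (carrier P)" using bij by (simp add: bij_betw_def)
  have sub: "\<And>H G. H \<in> subgroups_of_index G m \<Longrightarrow> H \<subseteq> carrier G"
    by (auto simp: subgroups_of_index_def dest: subgroup.subset)
  have img: "subgroups_of_index Q m = ?f ` subgroups_of_index P m"
  proof
    show "?f ` subgroups_of_index P m \<subseteq> subgroups_of_index Q m"
      using iso_image_subgroups_of_index[OF P Q phi] by blast
    show "subgroups_of_index Q m \<subseteq> ?f ` subgroups_of_index P m"
    proof
      fix H' assume H': "H' \<in> subgroups_of_index Q m"
      have "\<psi> ` H' \<in> subgroups_of_index P m"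
        using iso_image_subgroups_of_index[OF Q P psi H'] .
      moreover have "\<phi> ` \<psi> ` H' = H'"
      proof -
        have "H' \<subseteq> \<phi> ` carrier P" using sub[OF H'] bij by (simp add: bij_betw_def)
        then show ?thesis unfolding \<psi>_def image_image by (auto simp: f_inv_into_f intro!: image_eqI)
      qed
      ultimately show "H' \<in> ?f ` subgroups_of_index P m" by (metis image_eqI)
    qed
  qed
  have "subgroups_of_index P m \<subseteq> Pow (carrier P)" using sub by blast
  then have "inj_on ?f (subgroups_of_index P m)"
    using inj_on_image_Pow[OF inj] inj_on_subset by blast
  then show ?thesis using img by (simp add: card_image finite_image_iff)
qed

lemma carrier_Zpow: "carrier (Zpow n) = (\<Pi>\<^sub>E i\<in>{..<n}. UNIV)"
  by (simp add: Zpow_def)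

lemma mult_Zpow: "f \<otimes>\<^bsub>Zpow n\<^esub> g = (\<lambda>i\<in>{..<n}. f i + g i)"
  by (simp add: Zpow_def)

lemma group_Zpow: "group (Zpow n)"
  by (simp add: Zpow_def)

lemma iso_Zpow0:
  assumes "group D"
  shows "(\<lambda>d. (d, \<lambda>_. undefined)) \<in> iso D (D \<times>\<times> Zpow 0)"
proof -
  have c: "carrier (Zpow 0) = {\<lambda>_. undefined}" by (simp add: carrier_Zpow)
  show ?thesis
    unfolding iso_def
  proof (intro CollectI conjI)
    show "(\<lambda>d. (d, \<lambda>_. undefined)) \<in> hom D (D \<times>\<times> Zpow 0)"
      by (rule homI) (auto simp: c mult_Zpow monoid.m_closed group.is_monoid assms)
    show "bij_betw (\<lambda>d. (d, \<lambda>_. undefined)) (carrier D) (carrier (D \<times>\<times> Zpow 0))"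
      by (rule bij_betw_byWitness[where f' = fst]) (auto simp: c)
  qed
qed

lemma iso_Zpow_Suc:
  assumes "group D"
  shows "(\<lambda>((d, g), a). (d, g(n := a))) \<in> iso ((D \<times>\<times> Zpow n) \<times>\<times> integer_group) (D \<times>\<times> Zpow (Suc n))"
  unfolding iso_def
proof (intro CollectI conjI)
  show "(\<lambda>((d, g), a). (d, g(n := a))) \<in> hom ((D \<times>\<times> Zpow n) \<times>\<times> integer_group) (D \<times>\<times> Zpow (Suc n))"
  proof (rule homI, goal_cases)
    case (1 x)
    then show ?case by (auto simp: carrier_Zpow PiE_def extensional_def)
  next
    case (2 x y)
    obtain d g a where xd: "x = ((d, g), a)" by (metis prod.exhaust)
    obtain d' g' a' where yd: "y = ((d', g'), a')" by (metis prod.exhaust)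
    have "(\<lambda>i\<in>{..<n}. g i + g' i)(n := a + a') = (\<lambda>i\<in>{..<Suc n}. (g(n := a)) i + (g'(n := a')) i)"
      by (rule ext) (auto simp: less_Suc_eq)
    then show ?case
      by (simp add: xd yd mult_Zpow)
  qed
next
  show "bij_betw (\<lambda>((d, g), a). (d, g(n := a))) (carrier ((D \<times>\<times> Zpow n) \<times>\<times> integer_group))
      (carrier (D \<times>\<times> Zpow (Suc n)))"
  proof (rule bij_betw_byWitness[where f' = "\<lambda>(d, g). ((d, restrict g {..<n}), g n)"], goal_cases)
    case 1
    have key: "restrict (g(n := b)) {..<n} = g" if "g \<in> extensional {..<n}" for g :: "nat \<Rightarrow> int" and b
      using that unfolding extensional_def restrict_def fun_eq_iff by auto
    show ?case using key by (auto simp: carrier_Zpow PiE_def)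
  next
    case 2
    have key: "(restrict g {..<n})(n := g n) = g" if "g \<in> extensional {..<Suc n}" for g :: "nat \<Rightarrow> int"
      using that unfolding extensional_def restrict_def fun_eq_iff by (auto simp: less_Suc_eq)
    show ?case using key by (auto simp: carrier_Zpow PiE_def)
  next
    case 3
    show ?case
    proof
      fix y assume "y \<in> (\<lambda>((d, g), a). (d, g(n := a))) ` carrier ((D \<times>\<times> Zpow n) \<times>\<times> integer_group)"
      then obtain x where x: "x \<in> carrier ((D \<times>\<times> Zpow n) \<times>\<times> integer_group)"
        and yx: "y = (\<lambda>((d, g), a). (d, g(n := a))) x" by blast
      obtain d g b where xd: "x = ((d, g), b)" by (metis prod.exhaust)
      have y: "y = (d, g(n := b))" "d \<in> carrier D" "g \<in> extensional {..<n}"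
        using x yx xd by (simp_all add: carrier_Zpow PiE_def)
      have "g(n := b) \<in> extensional {..<Suc n}" using y(3) unfolding extensional_def by auto
      then show "y \<in> carrier (D \<times>\<times> Zpow (Suc n))" using y by (simp add: carrier_Zpow PiE_def)
    qed
  next
    case 4
    show ?case
    proof
      fix y assume "y \<in> (\<lambda>(d, g). ((d, restrict g {..<n}), g n)) ` carrier (D \<times>\<times> Zpow (Suc n))"
      then obtain x where x: "x \<in> carrier (D \<times>\<times> Zpow (Suc n))"
        and yx: "y = (\<lambda>(d, g). ((d, restrict g {..<n}), g n)) x" by blast
      obtain d g where xd: "x = (d, g)" by (metis prod.exhaust)
      have "y = ((d, restrict g {..<n}), g n)" "d \<in> carrier D" using x yx xd by simp_all
      moreover have "restrict g {..<n} \<in> carrier (Zpow n)" by (simp add: carrier_Zpow)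
      ultimately show "y \<in> carrier ((D \<times>\<times> Zpow n) \<times>\<times> integer_group)" by simp
    qed
  qed
qed

lemma comm_group_DZ:
  assumes "comm_group D"
  shows "comm_group (D \<times>\<times> Zpow n)"
proof -
  interpret D: comm_group D by (rule assms)
  interpret G: group "D \<times>\<times> Zpow n" by (simp add: DirProd_group D.is_group group_Zpow)
  show ?thesis
  proof (rule G.group_comm_groupI)
    fix x y assume "x \<in> carrier (D \<times>\<times> Zpow n)" "y \<in> carrier (D \<times>\<times> Zpow n)"
    then obtain d f d' f' where "x = (d, f)" "y = (d', f')" "d \<in> carrier D" "d' \<in> carrier D"
      by auto
    then show "x \<otimes>\<^bsub>D \<times>\<times> Zpow n\<^esub> y = y \<otimes>\<^bsub>D \<times>\<times> Zpow n\<^esub> x"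
      by (simp add: mult_Zpow D.m_comm add.commute)
  qed
qed

lemma finite_subgroups_of_index_finite:
  assumes "finite (carrier D)"
  shows "finite (subgroups_of_index D j)"
proof -
  have "subgroups_of_index D j \<subseteq> Pow (carrier D)"
    by (auto simp: subgroups_of_index_def dest: subgroup.subset)
  then show ?thesis using assms finite_subset by blast
qed

lemma DZ_0:
  assumes "group D"
  shows "finite (subgroups_of_index (D \<times>\<times> Zpow 0) j) = finite (subgroups_of_index D j) \<and>
    card (subgroups_of_index (D \<times>\<times> Zpow 0) j) = card (subgroups_of_index D j)"
  using iso_subgroups_of_index[OF assms DirProd_group[OF assms group_Zpow] iso_Zpow0[OF assms]] .

lemma DZ_Suc:
  assumes D: "comm_group D" and m: "m > 0"
    and fin: "\<And>j. j dvd m \<Longrightarrow> finite (subgroups_of_index (D \<times>\<times> Zpow n) j)"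
  shows "finite (subgroups_of_index (D \<times>\<times> Zpow (Suc n)) m) \<and>
    card (subgroups_of_index (D \<times>\<times> Zpow (Suc n)) m) =
      (\<Sum>j | j dvd m. j * card (subgroups_of_index (D \<times>\<times> Zpow n) j))"
proof -
  interpret G: comm_group "D \<times>\<times> Zpow n" by (rule comm_group_DZ[OF D])
  have gD: "group D" using D by (simp add: comm_group_def)
  have "finite (subgroups_of_index (D \<times>\<times> Zpow (Suc n)) m) = finite (subgroups_of_index ((D \<times>\<times> Zpow n) \<times>\<times> integer_group) m) \<and>
    card (subgroups_of_index (D \<times>\<times> Zpow (Suc n)) m) = card (subgroups_of_index ((D \<times>\<times> Zpow n) \<times>\<times> integer_group) m)"
    by (rule iso_subgroups_of_index[OF DirProd_group[OF G.is_group group_integer_group]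
          DirProd_group[OF gD group_Zpow] iso_Zpow_Suc[OF gD]])
  then show ?thesis using G.count_rec[OF m fin] by simp
qed

lemma DZ_fin:
  assumes D: "comm_group D" and fD: "finite (carrier D)"
  shows "j > 0 \<Longrightarrow> finite (subgroups_of_index (D \<times>\<times> Zpow n) j)"
proof (induction n arbitrary: j)
  case 0
  have "group D" using D by (simp add: comm_group_def)
  then show ?case using DZ_0 finite_subgroups_of_index_finite[OF fD] by blast
next
  case (Suc n)
  have "\<And>i. i dvd j \<Longrightarrow> finite (subgroups_of_index (D \<times>\<times> Zpow n) i)"
    using Suc by (metis dvd_0_left_iff neq0_conv)
  then show ?case using DZ_Suc[OF D Suc.prems] by blast
qed

definition chains :: "nat \<Rightarrow> nat \<Rightarrow> (nat \<Rightarrow> nat) set" where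
  "chains n m = {d \<in> {..<n} \<rightarrow>\<^sub>E {1..m}. (\<forall>i. Suc i < n \<longrightarrow> d i dvd d (Suc i)) \<and> d (n - 1) dvd m}"

definition RHS :: "(nat \<Rightarrow> nat) \<Rightarrow> nat \<Rightarrow> nat \<Rightarrow> nat" where
  "RHS a n m = (\<Sum>d \<in> chains n m. a (d 0) * (\<Prod>i<n. d i))"

lemma chain_dvd:
  assumes "\<forall>i. Suc i < N \<longrightarrow> d i dvd d (Suc i)"
  shows "i \<le> k \<Longrightarrow> k < N \<Longrightarrow> (d i :: nat) dvd d k"
proof (induction k)
  case 0
  then show ?case by simp
next
  case (Suc k)
  show ?case
  proof (cases "i = Suc k")
    case True
    then show ?thesis by simp
  next
    case False
    then have "d i dvd d k" using Suc by simp
    moreover have "d k dvd d (Suc k)" using assms Suc.prems by blast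
    ultimately show ?thesis using dvd_trans by blast
  qed
qed

lemma chains_finite: "finite (chains n m)"
proof -
  have "chains n m \<subseteq> {..<n} \<rightarrow>\<^sub>E {1..m}" by (auto simp: chains_def)
  then show ?thesis using finite_PiE[of "{..<n}" "\<lambda>_. {1..m}"] finite_subset by auto
qed

lemma finite_divisors_nat: "(0::nat) < m \<Longrightarrow> finite {j. j dvd m}"
  by (rule finite_subset[of _ "{..m}"]) (auto dest: dvd_imp_le)

lemma RHS_1:
  assumes m: "m > 0"
  shows "RHS a 1 m = (\<Sum>j | j dvd m. j * a j)"
  unfolding RHS_def
proof (rule sum.reindex_bij_witness[where j = "\<lambda>d. d 0" and i = "\<lambda>k. (\<lambda>_. undefined)(0 := k)"])
  fix d assume d: "d \<in> chains 1 m"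
  then have "d \<in> extensional {..<1}" by (auto simp: chains_def PiE_def)
  then show "((\<lambda>_. undefined)(0 := d 0)) = d" unfolding extensional_def fun_eq_iff by auto
  show "d 0 \<in> {j. j dvd m}" using d by (simp add: chains_def)
  show "d 0 * a (d 0) = a (d 0) * (\<Prod>i<1. d i)" by simp
next
  fix k assume k: "k \<in> {j. j dvd m}"
  show "((\<lambda>_. undefined)(0 := k)) 0 = k" by simp
  have "k \<ge> 1" "k \<le> m" using k m by (auto intro: Suc_leI Nat.gr0I dest: dvd_imp_le)
  then show "(\<lambda>_. undefined)(0 := k) \<in> chains 1 m" using k by (auto simp: chains_def PiE_def extensional_def)
qed

lemma RHS_Suc:
  assumes m: "m > 0" and n: "n \<ge> 1"
  shows "RHS a (Suc n) m = (\<Sum>j | j dvd m. j * RHS a n j)"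
proof -
  let ?Dv = "{j::nat. j dvd m}"
  have "(\<Sum>j\<in>?Dv. j * RHS a n j) = (\<Sum>j\<in>?Dv. \<Sum>e\<in>chains n j. j * (a (e 0) * (\<Prod>i<n. e i)))"
    by (simp add: RHS_def sum_distrib_left)
  also have "\<dots> = (\<Sum>(j, e)\<in>(SIGMA j:?Dv. chains n j). j * (a (e 0) * (\<Prod>i<n. e i)))"
    by (rule sum.Sigma) (auto simp: finite_divisors_nat[OF m] chains_finite)
  also have "\<dots> = RHS a (Suc n) m"
    unfolding RHS_def
  proof (rule sum.reindex_bij_witness[where j = "\<lambda>(k, e). e(n := k)" and i = "\<lambda>d. (d n, restrict d {..<n})"])
    fix p assume p: "p \<in> (SIGMA j:?Dv. chains n j)"
    obtain k e where pk: "p = (k, e)" by (metis prod.exhaust)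
    have k: "k dvd m" and e: "e \<in> chains n k" using p pk by auto
    have eext: "e \<in> extensional {..<n}" using e by (auto simp: chains_def PiE_def)
    show "(case case p of (k, e) \<Rightarrow> e(n := k) of d \<Rightarrow> (d n, restrict d {..<n})) = p"
      using eext unfolding pk extensional_def restrict_def fun_eq_iff by auto
    have k1: "k \<ge> 1" "k \<le> m" using k m by (auto intro: Suc_leI Nat.gr0I dest: dvd_imp_le)
    have erange: "e i \<in> {1..k}" if "i < n" for i using e that by (auto simp: chains_def PiE_def)
    have echain: "\<forall>i. Suc i < n \<longrightarrow> e i dvd e (Suc i)" "e (n - 1) dvd k" using e by (auto simp: chains_def)
    have "e(n := k) \<in> {..<Suc n} \<rightarrow>\<^sub>E {1..m}"
    proof -
      have "\<forall>i<n. e i \<le> m" using erange k1 by (meson atLeastAtMost_iff le_trans)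
      then show ?thesis
        using eext erange k1 unfolding PiE_def extensional_def by (auto simp: less_Suc_eq)
    qed
    moreover have "\<forall>i. Suc i < Suc n \<longrightarrow> (e(n := k)) i dvd (e(n := k)) (Suc i)"
    proof (intro allI impI)
      fix i assume "Suc i < Suc n"
      then have "Suc i < n \<or> Suc i = n" by auto
      then show "(e(n := k)) i dvd (e(n := k)) (Suc i)"
      proof
        assume "Suc i < n" then show ?thesis using echain by simp
      next
        assume "Suc i = n" then have "i = n - 1" by simp
        then show ?thesis using echain \<open>Suc i = n\<close> by simp
      qed
    qed
    moreover have "(e(n := k)) (Suc n - 1) dvd m" using k by simp
    ultimately show "(case p of (k, e) \<Rightarrow> e(n := k)) \<in> chains (Suc n) m"
      unfolding pk chains_def by simp
    have "(\<Prod>i<Suc n. (e(n := k)) i) = k * (\<Prod>i<n. e i)"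
      by (simp add: prod.lessThan_Suc)
    moreover have "(e(n := k)) 0 = e 0" using n by simp
    ultimately show "a ((case p of (k, e) \<Rightarrow> e(n := k)) 0) * (\<Prod>i<Suc n. (case p of (k, e) \<Rightarrow> e(n := k)) i) =
        (case p of (j, e) \<Rightarrow> j * (a (e 0) * (\<Prod>i<n. e i)))"
      unfolding pk by simp
  next
    fix d assume d: "d \<in> chains (Suc n) m"
    have dext: "d \<in> extensional {..<Suc n}" using d by (auto simp: chains_def PiE_def)
    show "(case (d n, restrict d {..<n}) of (k, e) \<Rightarrow> e(n := k)) = d"
      using dext unfolding extensional_def restrict_def fun_eq_iff by (auto simp: less_Suc_eq)
    have dch: "\<forall>i. Suc i < Suc n \<longrightarrow> d i dvd d (Suc i)" and dm: "d n dvd m"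
      using d by (auto simp: chains_def)
    have dr: "d i \<in> {1..m}" if "i < Suc n" for i using d that by (auto simp: chains_def PiE_def)
    have dn: "d i dvd d n" if "i < n" for i using chain_dvd[OF dch, of i n] that by simp
    have dpos: "d n > 0" using dr[of n] by auto
    have "restrict d {..<n} \<in> chains n (d n)"
      unfolding chains_def
    proof (intro CollectI conjI allI impI)
      show "restrict d {..<n} \<in> {..<n} \<rightarrow>\<^sub>E {1..d n}"
      proof -
        have "\<forall>i<n. d i \<le> d n" using dn dpos by (simp add: dvd_imp_le)
        then show ?thesis using dr by auto
      qed
      fix i assume "Suc i < n"
      then show "restrict d {..<n} i dvd restrict d {..<n} (Suc i)" using dch by simp
    next
      have n1: "n - 1 < n" "Suc (n - 1) = n" using n by auto
      then have "d (n - 1) dvd d n" using dch by (metis lessI)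
      then show "restrict d {..<n} (n - 1) dvd d n" using n1 by simp
    qed
    then show "(d n, restrict d {..<n}) \<in> (SIGMA j:?Dv. chains n j)" using dm by simp
  qed
  finally show ?thesis by (rule sym)
qed

lemma main_count:
  assumes D: "comm_group D" and fD: "finite (carrier D)" and n: "n \<ge> 1"
  shows "m > 0 \<Longrightarrow> card (subgroups_of_index (D \<times>\<times> Zpow n) m) = RHS (num_subgroups_of_index D) n m"
  using n
proof (induction n arbitrary: m rule: dec_induct)
  case base
  have gD: "group D" using D by (simp add: comm_group_def)
  have fin: "\<And>j. j dvd m \<Longrightarrow> finite (subgroups_of_index (D \<times>\<times> Zpow 0) j)"
    using DZ_fin[OF D fD] base by (metis dvd_0_left_iff neq0_conv)
  have "card (subgroups_of_index (D \<times>\<times> Zpow 1) m) = (\<Sum>j | j dvd m. j * card (subgroups_of_index (D \<times>\<times> Zpow 0) j))"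
    using DZ_Suc[OF D base fin] by simp
  also have "\<dots> = (\<Sum>j | j dvd m. j * num_subgroups_of_index D j)"
    using DZ_0[OF gD] by (simp add: num_subgroups_of_index_eq)
  also have "\<dots> = RHS (num_subgroups_of_index D) 1 m" using RHS_1[OF base] by simp
  finally show ?case .
next
  case (step k)
  have fin: "\<And>j. j dvd m \<Longrightarrow> finite (subgroups_of_index (D \<times>\<times> Zpow k) j)"
    using DZ_fin[OF D fD] step.prems by (metis dvd_0_left_iff neq0_conv)
  have "card (subgroups_of_index (D \<times>\<times> Zpow (Suc k)) m) = (\<Sum>j | j dvd m. j * card (subgroups_of_index (D \<times>\<times> Zpow k) j))"
    using DZ_Suc[OF D step.prems fin] by simp
  also have "\<dots> = (\<Sum>j | j dvd m. j * RHS (num_subgroups_of_index D) k j)"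
  proof (rule sum.cong)
    fix j assume "j \<in> {j. j dvd m}"
    then have "j > 0" using step.prems by (metis dvd_0_left_iff mem_Collect_eq neq0_conv)
    then show "j * card (subgroups_of_index (D \<times>\<times> Zpow k) j) = j * RHS (num_subgroups_of_index D) k j"
      using step.IH by simp
  qed simp
  also have "\<dots> = RHS (num_subgroups_of_index D) (Suc k) m"
    using RHS_Suc[OF step.prems step.hyps(1)] by simp
  finally show ?case .
qed

theorem proposition9p7:
  fixes D :: "('a, 'b) monoid_scheme" and n m :: nat
  assumes "comm_group D" and "finite (carrier D)" and "n \<ge> 1" and "m \<ge> 1"
  shows "num_subgroups_of_index (D \<times>\<times> Zpow n) m =
    (\<Sum>d \<in> {d \<in> {..<n} \<rightarrow>\<^sub>E {1..m}.
              (\<forall>i. Suc i < n \<longrightarrow> d i dvd d (Suc i)) \<and> d (n - 1) dvd m}.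
       num_subgroups_of_index D (d 0) * (\<Prod>i<n. d i))"
proof -
  have "num_subgroups_of_index (D \<times>\<times> Zpow n) m = RHS (num_subgroups_of_index D) n m"
    using main_count[OF assms(1,2,3)] assms(4) by (simp add: num_subgroups_of_index_eq)
  then show ?thesis by (simp add: RHS_def chains_def)
qed

end
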